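(* The set of bounded elements of $\mathcal{P}_{\mathrm{fci}}(I)$ is a definable subset of the structure $\mathcal{L}(I)$.
   Context: Let $I$ be a dense linear order with left endpoint $0$ and no right endpoint. Let $\mathcal{P}_{\mathrm{fci}}(I)$ be the set of finite unions of closed intervals $[i,j]$, $[i,+\infty)$, $(-\infty,j]$ of $I$. $\mathcal{L}(I)$ is the structure with universe $\mathcal{P}_{\mathrm{fci}}(I)$ in the signature $\{\cup,\cap,\bot,c_0,\min,\max,l,r\}$, interpreted as follows. - $\cup$ and $\cap$ are union and intersection. - $\bot$ is $\emptyset$, and $c_0$ is $\{0\}$. - $\min(A)$ is the singleton of the least element of $A$, with $\min(\emptyset)=\emptyset$. - $\max(A)$ is the singleton of the greatest element when $A$ is nonempty and bounded, and $\emptyset$ otherwise. - $l(A)$ and $r(A)$ are the sets of left and right endpoints of $A$. Left endpoints are the minima of the maximal closed intervals composing $A$. Right endpoints are the maxima of the bounded ones. *)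

theory Defs
  imports Main
begin

definition closed_interval :: "'a::linorder set \<Rightarrow> bool" where
  "closed_interval C \<longleftrightarrow>
     (\<exists>i j. i \<le> j \<and> C = {i..j}) \<or> (\<exists>i. C = {i..}) \<or> (\<exists>j. C = {..j})"

definition Pfci :: "'a::linorder set set" where
  "Pfci = {A. \<exists>F. finite F \<and> (\<forall>C\<in>F. closed_interval C) \<and> A = \<Union>F}"

definition bounded_el :: "'a::linorder set \<Rightarrow> bool" where
  "bounded_el A \<longleftrightarrow> (\<exists>j. \<forall>x\<in>A. x \<le> j)"

definition minL :: "'a::linorder set \<Rightarrow> 'a set" where
  "minL A = {x\<in>A. \<forall>y\<in>A. x \<le> y}"

definition maxL :: "'a::linorder set \<Rightarrow> 'a set" where
  "maxL A = {x\<in>A. \<forall>y\<in>A. y \<le> x}"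

definition max_interval :: "'a::linorder set \<Rightarrow> 'a set \<Rightarrow> bool" where
  "max_interval A C \<longleftrightarrow> closed_interval C \<and> C \<subseteq> A \<and>
     (\<forall>D. closed_interval D \<and> D \<subseteq> A \<and> C \<subseteq> D \<longrightarrow> D = C)"

definition lL :: "'a::linorder set \<Rightarrow> 'a set" where
  "lL A = {x. \<exists>C. max_interval A C \<and> x \<in> C \<and> (\<forall>y\<in>C. x \<le> y)}"

definition rL :: "'a::linorder set \<Rightarrow> 'a set" where
  "rL A = {x. \<exists>C. max_interval A C \<and> x \<in> C \<and> (\<forall>y\<in>C. y \<le> x)}"

datatype trm = Var nat | UnT trm trm | InterT trm trm | BotT | C0T
  | MinT trm | MaxT trm | LT trm | RT trm

datatype fml = Eq trm trm | Neg fml | Conj fml fml | Ex nat fml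

fun evalT :: "'a::linorder \<Rightarrow> (nat \<Rightarrow> 'a set) \<Rightarrow> trm \<Rightarrow> 'a set" where
  "evalT z e (Var n) = e n"
| "evalT z e (UnT s t) = evalT z e s \<union> evalT z e t"
| "evalT z e (InterT s t) = evalT z e s \<inter> evalT z e t"
| "evalT z e BotT = {}"
| "evalT z e C0T = {z}"
| "evalT z e (MinT t) = minL (evalT z e t)"
| "evalT z e (MaxT t) = maxL (evalT z e t)"
| "evalT z e (LT t) = lL (evalT z e t)"
| "evalT z e (RT t) = rL (evalT z e t)"

fun sat :: "'a::linorder \<Rightarrow> (nat \<Rightarrow> 'a set) \<Rightarrow> fml \<Rightarrow> bool" where
  "sat z e (Eq s t) = (evalT z e s = evalT z e t)"
| "sat z e (Neg \<phi>) = (\<not> sat z e \<phi>)"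
| "sat z e (Conj \<phi> \<psi>) = (sat z e \<phi> \<and> sat z e \<psi>)"
| "sat z e (Ex n \<phi>) = (\<exists>A\<in>Pfci. sat z (e(n := A)) \<phi>)"

text \<open>S is (parameter-free) definable in L(I): a formula in the free variable 0 defines it.\<close>
definition definable :: "'a::linorder \<Rightarrow> 'a set set \<Rightarrow> bool" where
  "definable z S \<longleftrightarrow> (\<exists>\<phi>. \<forall>e. (\<forall>n. e n \<in> Pfci) \<longrightarrow> (sat z e \<phi> \<longleftrightarrow> e 0 \<in> S))"

end

theory Submission
  imports Defs
begin

lemma ci_max:
  assumes nr: "\<forall>x::'a::linorder. \<exists>y. x < y"
    and c: "closed_interval (C::'a set)" and ne: "C \<noteq> {}" and b: "\<forall>x\<in>C. x \<le> j"
  shows "\<exists>x\<in>C. \<forall>y\<in>C. y \<le> x"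
  using c unfolding closed_interval_def
proof (elim disjE exE conjE)
  fix i assume "C = {i..}"
  moreover obtain y where "j < y" using nr by blast
  moreover have "i \<le> y \<or> y < i" by auto
  ultimately show ?thesis using b
  proof -
    assume C: "C = {i..}" and jy: "j < y"
    have "max i y \<in> C" using C by auto
    then have "max i y \<le> j" using b by blast
    then show ?thesis using jy by auto
  qed
qed auto

lemma union_max:
  assumes nr: "\<forall>x::'a::linorder. \<exists>y. x < y"
  shows "finite F \<Longrightarrow> (\<forall>C\<in>F. closed_interval (C::'a set)) \<Longrightarrow> \<Union>F \<noteq> {} \<Longrightarrow> (\<forall>x\<in>\<Union>F. x \<le> j)
     \<Longrightarrow> \<exists>x\<in>\<Union>F. \<forall>y\<in>\<Union>F. y \<le> x"
proof (induction F rule: finite_induct)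
  case empty then show ?case by simp
next
  case (insert C F)
  show ?case
  proof (cases "C = {}")
    case True then show ?thesis using insert by auto
  next
    case False
    then obtain a where a: "a \<in> C" "\<forall>y\<in>C. y \<le> a"
      using ci_max[OF nr, of C j] insert.prems by auto
    show ?thesis
    proof (cases "\<Union>F = {}")
      case True then show ?thesis using a by auto
    next
      case False
      then obtain b where b: "b \<in> \<Union>F" "\<forall>y\<in>\<Union>F. y \<le> b"
        using insert by auto
      show ?thesis
      proof (cases "a \<le> b")
        case True
        have "\<forall>y\<in>\<Union>(insert C F). y \<le> b" using a b True by (auto intro: order_trans)
        then show ?thesis using b(1) by blast
      next
        case False then have "b \<le> a" by auto
        have "\<forall>y\<in>\<Union>(insert C F). y \<le> a" using a b \<open>b \<le> a\<close> by (auto intro: order_trans)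
        then show ?thesis using a(1) by blast
      qed
    qed
  qed
qed

theorem lemma4p3:
  fixes z :: "'a::linorder"
  assumes dense: "\<forall>x y::'a. x < y \<longrightarrow> (\<exists>w. x < w \<and> w < y)"
    and left_end: "\<forall>x. z \<le> x"
    and no_right_end: "\<forall>x::'a. \<exists>y. x < y"
  shows "definable z {A \<in> Pfci. bounded_el A}"
  unfolding definable_def
proof (intro exI allI impI)
  fix e :: "nat \<Rightarrow> 'a set"
  assume e: "\<forall>n. e n \<in> Pfci"
  let ?A = "e 0"
  have "?A = {} \<or> maxL ?A \<noteq> {} \<longleftrightarrow> bounded_el ?A"
  proof
    assume "?A = {} \<or> maxL ?A \<noteq> {}"
    then show "bounded_el ?A" unfolding bounded_el_def maxL_def by auto
  next
    assume bd: "bounded_el ?A"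
    then obtain j where j: "\<forall>x\<in>?A. x \<le> j" unfolding bounded_el_def by auto
    have "?A \<in> Pfci" using e by simp
    then obtain F where F: "finite F" "\<forall>C\<in>F. closed_interval C" "?A = \<Union>F"
      unfolding Pfci_def by (auto simp only: mem_Collect_eq)
    show "?A = {} \<or> maxL ?A \<noteq> {}"
    proof (cases "?A = {}")
      case False
      then have "\<Union>F \<noteq> {}" "\<forall>x\<in>\<Union>F. x \<le> j" using F(3) j by auto
      then obtain x where "x \<in> \<Union>F" "\<forall>y\<in>\<Union>F. y \<le> x"
        using union_max[OF no_right_end F(1,2), of j] by blast
      then have "x \<in> maxL ?A" using F(3) unfolding maxL_def by simp
      then show ?thesis by blast
    qed simp
  qed
  then show "sat z e (Neg (Conj (Neg (Eq (Var 0) BotT)) (Eq (MaxT (Var 0)) BotT)))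
      = (e 0 \<in> {A \<in> Pfci. bounded_el A})" using e by auto
qed

end
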